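(* Let $G$ be a cubic graph with $|V(G)|\ge 4$ and let $v\in V(G)$. If $G^v$ is a Klee-graph, then $G$ is a Klee-graph.
   Context: For a cubic graph $G$ and $v\in V(G)$ with neighbours $x_1,x_2,x_3$, $G^v$ denotes the cubic graph obtained by replacing $v$ by a triangle: delete $v$, add new vertices $v_1,v_2,v_3$, the edges $v_1v_2,v_2v_3,v_3v_1$, and the edges $v_ix_i$ for $i=1,2,3$. A graph is a Klee-graph if it is $K_4$, or it equals $H^w$ for some Klee-graph $H$ and some $w\in V(H)$. *)

theory Defs
  imports Main
begin

definition simple_graph :: "'a set \<Rightarrow> 'a set set \<Rightarrow> bool" where
  "simple_graph V E \<longleftrightarrow> finite V \<and>
     (\<forall>e\<in>E. \<exists>a b. a \<in> V \<and> b \<in> V \<and> a \<noteq> b \<and> e = {a, b})"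

definition nbrs :: "'a set set \<Rightarrow> 'a \<Rightarrow> 'a set" where
  "nbrs E v = {u. {u, v} \<in> E}"

definition cubic :: "'a set \<Rightarrow> 'a set set \<Rightarrow> bool" where
  "cubic V E \<longleftrightarrow> simple_graph V E \<and> (\<forall>v\<in>V. card (nbrs E v) = 3)"

definition graph_iso :: "'a set \<Rightarrow> 'a set set \<Rightarrow> 'b set \<Rightarrow> 'b set set \<Rightarrow> bool" where
  "graph_iso V E V' E' \<longleftrightarrow> (\<exists>f. bij_betw f V V' \<and>
     (\<forall>a\<in>V. \<forall>b\<in>V. {a, b} \<in> E \<longleftrightarrow> {f a, f b} \<in> E'))"

definition is_K4 :: "'a set \<Rightarrow> 'a set set \<Rightarrow> bool" where
  "is_K4 V E \<longleftrightarrow> card V = 4 \<and> E = {{a, b} | a b. a \<in> V \<and> b \<in> V \<and> a \<noteq> b}"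

text \<open>Replacing vertex w (with neighbours x1,x2,x3) by a triangle on the new vertices
  v1,v2,v3, with v_i joined to x_i.\<close>
definition tri_vertices :: "'a set \<Rightarrow> 'a \<Rightarrow> 'a \<Rightarrow> 'a \<Rightarrow> 'a \<Rightarrow> 'a set" where
  "tri_vertices V w v1 v2 v3 = (V - {w}) \<union> {v1, v2, v3}"

definition tri_edges :: "'a set set \<Rightarrow> 'a \<Rightarrow> 'a \<Rightarrow> 'a \<Rightarrow> 'a \<Rightarrow> 'a \<Rightarrow> 'a \<Rightarrow> 'a \<Rightarrow> 'a set set" where
  "tri_edges E w v1 v2 v3 x1 x2 x3 =
     {e \<in> E. w \<notin> e} \<union> {{v1, v2}, {v2, v3}, {v3, v1}, {v1, x1}, {v2, x2}, {v3, x3}}"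

definition tri_data :: "'a set \<Rightarrow> 'a set set \<Rightarrow> 'a \<Rightarrow> 'a \<Rightarrow> 'a \<Rightarrow> 'a \<Rightarrow> 'a \<Rightarrow> 'a \<Rightarrow> 'a \<Rightarrow> bool" where
  "tri_data V E w v1 v2 v3 x1 x2 x3 \<longleftrightarrow>
     w \<in> V \<and> nbrs E w = {x1, x2, x3} \<and> x1 \<noteq> x2 \<and> x2 \<noteq> x3 \<and> x1 \<noteq> x3 \<and>
     v1 \<noteq> v2 \<and> v2 \<noteq> v3 \<and> v1 \<noteq> v3 \<and>
     v1 \<notin> V - {w} \<and> v2 \<notin> V - {w} \<and> v3 \<notin> V - {w}"

text \<open>Klee graphs: K4, closed under triangle replacement (and, graphs being
  considered up to isomorphism, under isomorphism).\<close>
inductive klee :: "'a set \<Rightarrow> 'a set set \<Rightarrow> bool" where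
  K4: "is_K4 V E \<Longrightarrow> klee V E"
| step: "klee V E \<Longrightarrow> tri_data V E w v1 v2 v3 x1 x2 x3 \<Longrightarrow>
         klee (tri_vertices V w v1 v2 v3) (tri_edges E w v1 v2 v3 x1 x2 x3)"
| iso: "klee V E \<Longrightarrow> simple_graph V' E' \<Longrightarrow> graph_iso V E V' E' \<Longrightarrow> klee V' E'"

end

theory Submission
  imports Defs
begin

lemma edge_in: "simple_graph V E \<Longrightarrow> {a,b} \<in> E \<Longrightarrow> a \<in> V \<and> b \<in> V \<and> a \<noteq> b"
  unfolding simple_graph_def by (metis doubleton_eq_iff)

lemma nbrs_iff: "u \<in> nbrs E w \<longleftrightarrow> {u,w} \<in> E" by (simp add: nbrs_def)

locale tri =
  fixes V :: "'a set" and E v v1 v2 v3 x1 x2 x3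
  assumes sg: "simple_graph V E" and td: "tri_data V E v v1 v2 v3 x1 x2 x3"
begin

abbreviation "V' \<equiv> tri_vertices V v v1 v2 v3"
abbreviation "E' \<equiv> tri_edges E v v1 v2 v3 x1 x2 x3"

lemma basic:
  "v \<in> V" "x1 \<in> V" "x2 \<in> V" "x3 \<in> V" "x1 \<noteq> v" "x2 \<noteq> v" "x3 \<noteq> v"
  "x1 \<noteq> x2" "x2 \<noteq> x3" "x1 \<noteq> x3" "v1 \<noteq> v2" "v2 \<noteq> v3" "v1 \<noteq> v3"
  "v1 \<notin> V - {v}" "v2 \<notin> V - {v}" "v3 \<notin> V - {v}"
  "{x1,v} \<in> E" "{x2,v} \<in> E" "{x3,v} \<in> E" "nbrs E v = {x1,x2,x3}"
  using td edge_in[OF sg] unfolding tri_data_def nbrs_def by (auto simp: set_eq_iff)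

lemma vx: "v1 \<noteq> x1" "v1 \<noteq> x2" "v1 \<noteq> x3" "v2 \<noteq> x1" "v2 \<noteq> x2" "v2 \<noteq> x3"
  "v3 \<noteq> x1" "v3 \<noteq> x2" "v3 \<noteq> x3" "v1 \<notin> V \<or> v1 = v" "v2 \<notin> V \<or> v2 = v" "v3 \<notin> V \<or> v3 = v"
  using basic by auto

lemma ein: "{a,b} \<in> E \<Longrightarrow> a \<in> V \<and> b \<in> V \<and> a \<noteq> b" using edge_in[OF sg] .

lemma nbv: "{a,v} \<in> E \<longleftrightarrow> a = x1 \<or> a = x2 \<or> a = x3"
  using basic(20) unfolding nbrs_def by (auto simp: set_eq_iff)

lemma TE: "{a,b} \<in> E' \<longleftrightarrow> ({a,b} \<in> E \<and> a \<noteq> v \<and> b \<noteq> v) \<or>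
   (a = v1 \<and> b = v2) \<or> (a = v2 \<and> b = v1) \<or> (a = v2 \<and> b = v3) \<or> (a = v3 \<and> b = v2) \<or>
   (a = v3 \<and> b = v1) \<or> (a = v1 \<and> b = v3) \<or> (a = v1 \<and> b = x1) \<or> (a = x1 \<and> b = v1) \<or>
   (a = v2 \<and> b = x2) \<or> (a = x2 \<and> b = v2) \<or> (a = v3 \<and> b = x3) \<or> (a = x3 \<and> b = v3)"
  unfolding tri_edges_def by (auto simp: doubleton_eq_iff)

lemma TEv: "{a,b} \<in> E' \<longleftrightarrow> ({a,b} \<in> E \<and> a \<in> V - {v} \<and> b \<in> V - {v}) \<or>
   (a = v1 \<and> b = v2) \<or> (a = v2 \<and> b = v1) \<or> (a = v2 \<and> b = v3) \<or> (a = v3 \<and> b = v2) \<or>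
   (a = v3 \<and> b = v1) \<or> (a = v1 \<and> b = v3) \<or> (a = v1 \<and> b = x1) \<or> (a = x1 \<and> b = v1) \<or>
   (a = v2 \<and> b = x2) \<or> (a = x2 \<and> b = v2) \<or> (a = v3 \<and> b = x3) \<or> (a = x3 \<and> b = v3)"
proof -
  have "({a,b} \<in> E \<and> a \<noteq> v \<and> b \<noteq> v) \<longleftrightarrow> ({a,b} \<in> E \<and> a \<in> V - {v} \<and> b \<in> V - {v})"
    using ein[of a b] by blast
  then show ?thesis unfolding TE by (simp only:)
qed

lemma J1: "a \<in> V - {v} \<Longrightarrow> b \<in> V - {v} \<Longrightarrow> {a,b} \<in> E' \<longleftrightarrow> {a,b} \<in> E"
  unfolding TEv using basic(14-16) by auto

lemma J2: "b \<in> V - {v} \<Longrightarrow> {v,b} \<in> E \<longleftrightarrow> ({v1,b} \<in> E' \<or> {v2,b} \<in> E' \<or> {v3,b} \<in> E')"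
  unfolding TEv using basic nbv[of b] by (auto simp: insert_commute)

lemma N1: "{v1,u} \<in> E' \<longleftrightarrow> u = v2 \<or> u = v3 \<or> u = x1"
  unfolding TEv using basic(11-16) vx by auto
lemma N2: "{v2,u} \<in> E' \<longleftrightarrow> u = v1 \<or> u = v3 \<or> u = x2"
  unfolding TEv using basic(11-16) vx by auto
lemma N3: "{v3,u} \<in> E' \<longleftrightarrow> u = v1 \<or> u = v2 \<or> u = x3"
  unfolding TEv using basic(11-16) vx by auto

lemma Vs: "V' = (V - {v}) \<union> {v1,v2,v3}" by (simp add: tri_vertices_def)

lemma simple': "simple_graph V' E'"
proof -
  have "finite V" using sg by (simp add: simple_graph_def)
  moreover have "\<forall>e\<in>E'. \<exists>a b. a \<in> V' \<and> b \<in> V' \<and> a \<noteq> b \<and> e = {a, b}"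
  proof
    fix e assume "e \<in> E'"
    then consider "e \<in> E" "v \<notin> e" | "e \<in> {{v1, v2}, {v2, v3}, {v3, v1}, {v1, x1}, {v2, x2}, {v3, x3}}"
      unfolding tri_edges_def by blast
    then show "\<exists>a b. a \<in> V' \<and> b \<in> V' \<and> a \<noteq> b \<and> e = {a, b}"
    proof cases
      case 1
      then obtain a b where "a \<in> V" "b \<in> V" "a \<noteq> b" "e = {a,b}" using sg unfolding simple_graph_def by blast
      then show ?thesis using 1 unfolding Vs by blast
    next
      case 2 then show ?thesis unfolding Vs using basic by auto
    qed
  qed
  ultimately show ?thesis unfolding simple_graph_def Vs by auto
qed

lemma card': "card V' = card V + 2"
proof -
  have f: "finite V" using sg by (simp add: simple_graph_def)
  have "card V' = card (V - {v}) + card {v1,v2,v3}" unfolding Vs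
    by (rule card_Un_disjoint) (use f basic in auto)
  moreover have "card {v1,v2,v3} = 3" using basic by auto
  moreover have "card (V - {v}) = card V - 1" using f basic by simp
  moreover have "card V \<ge> 1" using f basic by (metis card_0_eq empty_iff less_one not_le)
  ultimately show ?thesis by simp
qed

end

definition nodia :: "'a set set \<Rightarrow> bool" where
  "nodia E \<longleftrightarrow> (\<forall>a b c d. {a,b} \<in> E \<longrightarrow> {a,c} \<in> E \<longrightarrow> {b,c} \<in> E \<longrightarrow> {a,d} \<in> E \<longrightarrow> {b,d} \<in> E \<longrightarrow> c = d)"

context tri begin

lemma ein': "{a,b} \<in> E' \<Longrightarrow> a \<in> V' \<and> b \<in> V' \<and> a \<noteq> b" using edge_in[OF simple'] .

lemma nx: "{x1,v2} \<notin> E'" "{x1,v3} \<notin> E'" "{v2,x1} \<notin> E'" "{v3,x1} \<notin> E'"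
  "{x2,v1} \<notin> E'" "{x2,v3} \<notin> E'" "{v1,x2} \<notin> E'" "{v3,x2} \<notin> E'"
  "{x3,v1} \<notin> E'" "{x3,v2} \<notin> E'" "{v1,x3} \<notin> E'" "{v2,x3} \<notin> E'"
  using N1[of x2] N1[of x3] N2[of x1] N2[of x3] N3[of x1] N3[of x2] vx basic(8-10)
  by (auto simp: insert_commute)

lemma triangle:
  assumes "{p,q} \<in> E'" "{p,r} \<in> E'" "{q,r} \<in> E'" "p \<in> {v1,v2,v3} \<or> q \<in> {v1,v2,v3} \<or> r \<in> {v1,v2,v3}"
  shows "p \<in> {v1,v2,v3} \<and> q \<in> {v1,v2,v3} \<and> r \<in> {v1,v2,v3}"
proof -
  have sym: "{b,a} \<in> E' \<longleftrightarrow> {a,b} \<in> E'" for a b by (simp add: insert_commute)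
  have key: "{a,b} \<in> E' \<Longrightarrow> {a,c} \<in> E' \<Longrightarrow> {b,c} \<in> E' \<Longrightarrow> a \<in> {v1,v2,v3} \<Longrightarrow> b \<in> {v1,v2,v3} \<and> c \<in> {v1,v2,v3}" for a b c
  proof -
    assume ab: "{a,b} \<in> E'" and ac: "{a,c} \<in> E'" and bc: "{b,c} \<in> E'" and a: "a \<in> {v1,v2,v3}"
    have bcne: "b \<noteq> c" using ein'[OF bc] by simp
    show ?thesis using a
    proof (elim insertE emptyE)
      assume "a = v1"
      then have "b = v2 \<or> b = v3 \<or> b = x1" "c = v2 \<or> c = v3 \<or> c = x1" using N1[of b] N1[of c] ab ac by auto
      then show ?thesis using bc bcne nx by auto
    next
      assume "a = v2"
      then have "b = v1 \<or> b = v3 \<or> b = x2" "c = v1 \<or> c = v3 \<or> c = x2" using N2[of b] N2[of c] ab ac by auto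
      then show ?thesis using bc bcne nx by auto
    next
      assume "a = v3"
      then have "b = v1 \<or> b = v2 \<or> b = x3" "c = v1 \<or> c = v2 \<or> c = x3" using N3[of b] N3[of c] ab ac by auto
      then show ?thesis using bc bcne nx by auto
    qed
  qed
  show ?thesis using assms(4)
  proof (elim disjE)
    assume "p \<in> {v1,v2,v3}" then show ?thesis using key[of p q r] assms(1-3) by blast
  next
    assume "q \<in> {v1,v2,v3}" then show ?thesis using key[of q p r] assms(1-3) sym by blast
  next
    assume "r \<in> {v1,v2,v3}" then show ?thesis using key[of r p q] assms(1-3) sym by blast
  qed
qed

lemma NBF: assumes "u \<in> V - {v}" shows "nbrs E' u = (nbrs E u - {v}) \<union> (if u = x1 then {v1} else {})
   \<union> (if u = x2 then {v2} else {}) \<union> (if u = x3 then {v3} else {})"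
proof (rule set_eqI)
  fix w
  have u: "u \<noteq> v1" "u \<noteq> v2" "u \<noteq> v3" using assms basic(14-16) by auto
  show "w \<in> nbrs E' u \<longleftrightarrow> w \<in> (nbrs E u - {v}) \<union> (if u = x1 then {v1} else {})
   \<union> (if u = x2 then {v2} else {}) \<union> (if u = x3 then {v3} else {})"
    unfolding nbrs_iff[of w E' u] TEv using ein[of w u] u assms basic(8-10) by (auto simp: nbrs_iff)
qed

lemma NBFx: "nbrs E' x1 = insert v1 (nbrs E x1 - {v})" "nbrs E' x2 = insert v2 (nbrs E x2 - {v})"
  "nbrs E' x3 = insert v3 (nbrs E x3 - {v})"
proof -
  have "x1 \<in> V - {v}" "x2 \<in> V - {v}" "x3 \<in> V - {v}" using basic by auto
  note h = NBF[OF this(1)] NBF[OF this(2)] NBF[OF this(3)]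
  show "nbrs E' x1 = insert v1 (nbrs E x1 - {v})" using h(1) basic(8-10) by simp
  show "nbrs E' x2 = insert v2 (nbrs E x2 - {v})" using h(2) basic(8-10) by simp
  show "nbrs E' x3 = insert v3 (nbrs E x3 - {v})" using h(3) basic(8-10) by simp
qed

lemma NBFo: assumes "u \<in> V - {v}" "u \<notin> {x1,x2,x3}" shows "nbrs E' u = nbrs E u"
proof -
  have "v \<notin> nbrs E u" using nbv[of u] assms(2) by (simp add: nbrs_iff insert_commute)
  then show ?thesis using NBF[OF assms(1)] assms(2) by simp
qed

lemma finV: "finite V" using sg by (simp add: simple_graph_def)

lemma nbrs_sub: "nbrs E u \<subseteq> V" using ein unfolding nbrs_def by auto

lemma vinx: "v \<in> nbrs E x1" "v \<in> nbrs E x2" "v \<in> nbrs E x3"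
  using basic(17-19) unfolding nbrs_iff by (auto simp: insert_commute)

lemma finN: "finite (nbrs E u)" using nbrs_sub finV finite_subset by blast

lemma Tnot: "v1 \<notin> nbrs E u - {v}" "v2 \<notin> nbrs E u - {v}" "v3 \<notin> nbrs E u - {v}"
  using nbrs_sub basic(14-16) by auto

lemma card_swap: "finite N \<Longrightarrow> v \<in> N \<Longrightarrow> i \<notin> N - {v} \<Longrightarrow> card (insert i (N - {v})) = card N"
  by (metis card_Suc_Diff1 card_insert_disjoint finite_Diff)

lemma cardx: "card (nbrs E' x1) = card (nbrs E x1)" "card (nbrs E' x2) = card (nbrs E x2)"
  "card (nbrs E' x3) = card (nbrs E x3)"
  unfolding NBFx using card_swap[OF finN vinx(1) Tnot(1)] card_swap[OF finN vinx(2) Tnot(2)]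
    card_swap[OF finN vinx(3) Tnot(3)] by simp_all

lemma cardN: assumes "u \<in> V - {v}" shows "card (nbrs E' u) = card (nbrs E u)"
proof (cases "u \<in> {x1,x2,x3}")
  case True then show ?thesis using cardx by auto
next
  case False then show ?thesis using NBFo[OF assms] by simp
qed

lemma cub_fwd: assumes "cubic V E" shows "cubic V' E'"
  unfolding cubic_def
proof (intro conjI ballI simple')
  fix u assume u: "u \<in> V'"
  have sym: "{b,a} \<in> E' \<longleftrightarrow> {a,b} \<in> E'" for a b by (simp add: insert_commute)
  consider "u = v1" | "u = v2" | "u = v3" | "u \<in> V - {v}" using u Vs by auto
  then show "card (nbrs E' u) = 3"
  proof cases
    case 1 then have "nbrs E' u = {v2,v3,x1}" unfolding nbrs_def using N1 sym by auto
    then show ?thesis using basic vx by auto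
  next
    case 2 then have "nbrs E' u = {v1,v3,x2}" unfolding nbrs_def using N2 sym by auto
    then show ?thesis using basic vx by auto
  next
    case 3 then have "nbrs E' u = {v1,v2,x3}" unfolding nbrs_def using N3 sym by auto
    then show ?thesis using basic vx by auto
  next
    case 4 then show ?thesis using cardN[OF 4] assms unfolding cubic_def by auto
  qed
qed

lemma cub_bwd: assumes "cubic V' E'" shows "cubic V E"
  unfolding cubic_def
proof (intro conjI ballI sg)
  fix u assume u: "u \<in> V"
  show "card (nbrs E u) = 3"
  proof (cases "u = v")
    case True then show ?thesis using basic by auto
  next
    case False
    then have 4: "u \<in> V - {v}" using u by simp
    then have "u \<in> V'" using Vs by auto
    then show ?thesis using assms cardN[OF 4] unfolding cubic_def by auto
  qed
qed

lemma nodia_fwd: assumes "card V = 4 \<or> nodia E" shows "nodia E'"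
  unfolding nodia_def
proof (intro allI impI)
  fix a b c d
  assume ab: "{a,b} \<in> E'" and ac: "{a,c} \<in> E'" and bc: "{b,c} \<in> E'" and ad: "{a,d} \<in> E'" and bd: "{b,d} \<in> E'"
  show "c = d"
  proof (rule ccontr)
    assume cd: "c \<noteq> d"
    have ne: "a \<noteq> b" "a \<noteq> c" "b \<noteq> c" "a \<noteq> d" "b \<noteq> d"
      using ein'[OF ab] ein'[OF ac] ein'[OF bc] ein'[OF ad] ein'[OF bd] by auto
    have inV': "a \<in> V'" "b \<in> V'" "c \<in> V'" "d \<in> V'"
      using ein'[OF ab] ein'[OF ac] ein'[OF ad] by auto
    let ?T = "{v1,v2,v3}"
    show False
    proof (cases "a \<in> ?T \<or> b \<in> ?T \<or> c \<in> ?T \<or> d \<in> ?T")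
      case True
      have t1: "a \<in> ?T \<or> b \<in> ?T \<or> c \<in> ?T \<Longrightarrow> a \<in> ?T \<and> b \<in> ?T \<and> c \<in> ?T"
        using triangle[OF ab ac bc] by blast
      have t2: "a \<in> ?T \<or> b \<in> ?T \<or> d \<in> ?T \<Longrightarrow> a \<in> ?T \<and> b \<in> ?T \<and> d \<in> ?T"
        using triangle[OF ab ad bd] by blast
      have "a \<in> ?T \<and> b \<in> ?T \<and> c \<in> ?T \<and> d \<in> ?T" using True t1 t2 by blast
      then show False using ne cd by auto
    next
      case False
      then have inV: "a \<in> V - {v}" "b \<in> V - {v}" "c \<in> V - {v}" "d \<in> V - {v}"
        using inV' unfolding Vs by auto
      have E: "{a,b} \<in> E" "{a,c} \<in> E" "{b,c} \<in> E" "{a,d} \<in> E" "{b,d} \<in> E"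
        using J1[OF inV(1) inV(2)] J1[OF inV(1) inV(3)] J1[OF inV(2) inV(3)]
          J1[OF inV(1) inV(4)] J1[OF inV(2) inV(4)] ab ac bc ad bd by auto
      show False using assms
      proof
        assume "nodia E" then show False using E cd unfolding nodia_def by blast
      next
        assume c4: "card V = 4"
        have "card {a,b,c,d} = 4" using ne cd by auto
        moreover have "card {a,b,c,d} \<le> card (V - {v})" using inV finV by (intro card_mono) auto
        moreover have "card (V - {v}) = 3" using c4 basic finV by simp
        ultimately show False by simp
      qed
    qed
  qed
qed

end

lemma iso_sym: assumes "graph_iso V E V' E'" shows "graph_iso V' E' V E"
proof -
  obtain f where f: "bij_betw f V V'" "\<forall>a\<in>V. \<forall>b\<in>V. {a, b} \<in> E \<longleftrightarrow> {f a, f b} \<in> E'"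
    using assms unfolding graph_iso_def by blast
  let ?g = "inv_into V f"
  have g: "bij_betw ?g V' V" using f(1) by (rule bij_betw_inv_into)
  have "\<forall>a\<in>V'. \<forall>b\<in>V'. {a, b} \<in> E' \<longleftrightarrow> {?g a, ?g b} \<in> E"
  proof (intro ballI)
    fix a b assume a: "a \<in> V'" and b: "b \<in> V'"
    have ga: "?g a \<in> V" "f (?g a) = a" using a f(1) g bij_betw_apply bij_betw_inv_into_right by fastforce+
    have gb: "?g b \<in> V" "f (?g b) = b" using b f(1) g bij_betw_apply bij_betw_inv_into_right by fastforce+
    show "{a, b} \<in> E' \<longleftrightarrow> {?g a, ?g b} \<in> E" using f(2) ga gb by metis
  qed
  then show ?thesis using g unfolding graph_iso_def by blast
qed

lemma iso_trans: assumes "graph_iso V1 E1 V2 E2" "graph_iso V2 E2 V3 E3" shows "graph_iso V1 E1 V3 E3"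
proof -
  obtain f where f: "bij_betw f V1 V2" "\<forall>a\<in>V1. \<forall>b\<in>V1. {a, b} \<in> E1 \<longleftrightarrow> {f a, f b} \<in> E2"
    using assms(1) unfolding graph_iso_def by blast
  obtain g where g: "bij_betw g V2 V3" "\<forall>a\<in>V2. \<forall>b\<in>V2. {a, b} \<in> E2 \<longleftrightarrow> {g a, g b} \<in> E3"
    using assms(2) unfolding graph_iso_def by blast
  have "bij_betw (g \<circ> f) V1 V3" using f(1) g(1) by (rule bij_betw_trans)
  moreover have "\<forall>a\<in>V1. \<forall>b\<in>V1. {a, b} \<in> E1 \<longleftrightarrow> {(g \<circ> f) a, (g \<circ> f) b} \<in> E3"
  proof (intro ballI)
    fix a b assume a: "a \<in> V1" and b: "b \<in> V1"
    have "f a \<in> V2" "f b \<in> V2" using a b bij_betw_apply[OF f(1)] by auto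
    then have "{f a, f b} \<in> E2 \<longleftrightarrow> {g (f a), g (f b)} \<in> E3" using g(2) by blast
    moreover have "{a, b} \<in> E1 \<longleftrightarrow> {f a, f b} \<in> E2" using f(2) a b by blast
    ultimately show "{a, b} \<in> E1 \<longleftrightarrow> {(g \<circ> f) a, (g \<circ> f) b} \<in> E3" by simp
  qed
  ultimately show ?thesis unfolding graph_iso_def by blast
qed

lemma iso_refl: "graph_iso V E V E"
  unfolding graph_iso_def by (rule exI[of _ id]) simp

lemma iso_card: "graph_iso V E V' E' \<Longrightarrow> card V = card V'"
  unfolding graph_iso_def using bij_betw_same_card by blast

lemma iso_nbrs:
  assumes "simple_graph V E" "simple_graph V' E'" "bij_betw f V V'"
    "\<forall>a\<in>V. \<forall>b\<in>V. {a, b} \<in> E \<longleftrightarrow> {f a, f b} \<in> E'" "u \<in> V"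
  shows "nbrs E' (f u) = f ` nbrs E u"
proof (rule set_eqI)
  fix y
  show "y \<in> nbrs E' (f u) \<longleftrightarrow> y \<in> f ` nbrs E u"
  proof
    assume "y \<in> nbrs E' (f u)"
    then have y: "{y, f u} \<in> E'" by (simp add: nbrs_iff)
    then have "y \<in> V'" using edge_in[OF assms(2)] by blast
    then obtain x where x: "x \<in> V" "y = f x" using assms(3) bij_betw_imp_surj_on by blast
    then have "{x,u} \<in> E" using assms(4,5) y by blast
    then show "y \<in> f ` nbrs E u" using x by (simp add: nbrs_iff)
  next
    assume "y \<in> f ` nbrs E u"
    then obtain x where x: "{x,u} \<in> E" "y = f x" by (auto simp: nbrs_iff)
    then have "x \<in> V" using edge_in[OF assms(1)] by blast
    then show "y \<in> nbrs E' (f u)" using x assms(4,5) by (simp add: nbrs_iff)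
  qed
qed

lemma iso_cubic: assumes "cubic V E" "simple_graph V' E'" "graph_iso V E V' E'" shows "cubic V' E'"
proof -
  obtain f where f: "bij_betw f V V'" "\<forall>a\<in>V. \<forall>b\<in>V. {a, b} \<in> E \<longleftrightarrow> {f a, f b} \<in> E'"
    using assms(3) unfolding graph_iso_def by blast
  have sg: "simple_graph V E" using assms(1) by (simp add: cubic_def)
  have "card (nbrs E' u') = 3" if u': "u' \<in> V'" for u'
  proof -
    obtain u where u: "u \<in> V" "u' = f u" using u' f(1) bij_betw_imp_surj_on by blast
    have "nbrs E u \<subseteq> V" using edge_in[OF sg] by (auto simp: nbrs_iff)
    then have "inj_on f (nbrs E u)" using f(1) bij_betw_imp_inj_on inj_on_subset by blast
    then have "card (nbrs E' u') = card (nbrs E u)" using iso_nbrs[OF sg assms(2) f u(1)] u(2)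
      by (simp add: card_image)
    then show ?thesis using assms(1) u(1) unfolding cubic_def by simp
  qed
  then show ?thesis using assms(2) unfolding cubic_def by blast
qed

lemma iso_nodia: assumes "nodia E" "simple_graph V' E'" "graph_iso V E V' E'" shows "nodia E'"
proof -
  obtain g where g: "bij_betw g V' V" "\<forall>a\<in>V'. \<forall>b\<in>V'. {a, b} \<in> E' \<longleftrightarrow> {g a, g b} \<in> E"
    using iso_sym[OF assms(3)] unfolding graph_iso_def by blast
  have inj: "inj_on g V'" using g(1) bij_betw_imp_inj_on by blast
  show ?thesis unfolding nodia_def
  proof (intro allI impI)
    fix a b c d
    assume h: "{a, b} \<in> E'" "{a, c} \<in> E'" "{b, c} \<in> E'" "{a, d} \<in> E'" "{b, d} \<in> E'"
    then have V: "a \<in> V'" "b \<in> V'" "c \<in> V'" "d \<in> V'" using edge_in[OF assms(2)] by blast+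
    have "{g a, g b} \<in> E" "{g a, g c} \<in> E" "{g b, g c} \<in> E" "{g a, g d} \<in> E" "{g b, g d} \<in> E"
      using g(2) V h by blast+
    then have "g c = g d" using assms(1) unfolding nodia_def by blast
    then show "c = d" using inj V by (meson inj_on_eq_iff)
  qed
qed

lemma K4_cubic: assumes "is_K4 V E" shows "cubic V E"
proof -
  have c: "card V = 4" and E: "E = {{a, b} | a b. a \<in> V \<and> b \<in> V \<and> a \<noteq> b}" using assms by (auto simp: is_K4_def)
  have fin: "finite V" using c by (metis card.infinite zero_neq_numeral)
  have sg: "simple_graph V E" unfolding simple_graph_def E using fin by blast
  have "nbrs E u = V - {u}" if "u \<in> V" for u
    using that unfolding nbrs_def E by (auto simp: doubleton_eq_iff)
  then have "card (nbrs E u) = 3" if "u \<in> V" for u using that c fin by simp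
  then show ?thesis using sg unfolding cubic_def by blast
qed

lemma cubic4_K4: assumes "cubic V E" "card V = 4" shows "is_K4 V E"
proof -
  have sg: "simple_graph V E" using assms(1) by (simp add: cubic_def)
  have fin: "finite V" using sg by (simp add: simple_graph_def)
  have nb: "nbrs E u = V - {u}" if u: "u \<in> V" for u
  proof -
    have "nbrs E u \<subseteq> V - {u}"
    proof
      fix x assume "x \<in> nbrs E u"
      then have "{x,u} \<in> E" by (simp add: nbrs_iff)
      then show "x \<in> V - {u}" using edge_in[OF sg, of x u] by blast
    qed
    moreover have "card (nbrs E u) = card (V - {u})" using assms u fin unfolding cubic_def by simp
    ultimately show ?thesis using fin by (simp add: card_subset_eq)
  qed
  have "E = {{a, b} | a b. a \<in> V \<and> b \<in> V \<and> a \<noteq> b}"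
  proof (intro set_eqI iffI)
    fix e assume "e \<in> E" then show "e \<in> {{a, b} | a b. a \<in> V \<and> b \<in> V \<and> a \<noteq> b}"
      using sg unfolding simple_graph_def by blast
  next
    fix e assume "e \<in> {{a, b} | a b. a \<in> V \<and> b \<in> V \<and> a \<noteq> b}"
    then obtain a b where ab: "a \<in> V" "b \<in> V" "a \<noteq> b" "e = {a,b}" by blast
    then have "a \<in> nbrs E b" using nb[OF ab(2)] by simp
    then show "e \<in> E" using ab(4) by (simp add: nbrs_iff)
  qed
  then show ?thesis using assms(2) by (simp add: is_K4_def)
qed

lemma klee_inv: "klee V E \<Longrightarrow> cubic V E \<and> (card V = 4 \<or> nodia E)"
proof (induction rule: klee.induct)
  case (K4 V E) from K4_cubic[OF K4.hyps] K4.hyps show ?case by (simp add: is_K4_def)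
next
  case (step V E w v1 v2 v3 x1 x2 x3)
  have "simple_graph V E" using step.IH by (simp add: cubic_def)
  then interpret tri V E w v1 v2 v3 x1 x2 x3 using step.hyps(2) by unfold_locales
  show ?case using cub_fwd[OF conjunct1[OF step.IH]] nodia_fwd[OF conjunct2[OF step.IH]] by blast
next
  case (iso V E V' E')
  have "cubic V' E'" using iso_cubic[OF _ iso.hyps(2,3)] iso.IH by blast
  moreover have "card V' = card V" using iso_card[OF iso.hyps(3)] by simp
  moreover have "nodia E \<Longrightarrow> nodia E'" using iso_nodia[OF _ iso.hyps(2,3)] .
  ultimately show ?case using iso.IH by auto
qed

context tri begin

lemma transfer:
  assumes phi: "bij_betw \<phi> V' VK"
    and adj: "\<forall>a\<in>V'. \<forall>b\<in>V'. {a, b} \<in> E' \<longleftrightarrow> {\<phi> a, \<phi> b} \<in> EK"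
    and VB: "VB = (VK - \<phi> ` {v1,v2,v3}) \<union> {c}" and cn: "c \<notin> VK - \<phi> ` {v1,v2,v3}"
    and K1: "\<forall>g\<in>VK - \<phi> ` {v1,v2,v3}. \<forall>d\<in>VK - \<phi> ` {v1,v2,v3}. {g,d} \<in> EB \<longleftrightarrow> {g,d} \<in> EK"
    and K2: "\<forall>d\<in>VK - \<phi> ` {v1,v2,v3}. {c,d} \<in> EB \<longleftrightarrow> (\<exists>i\<in>\<phi> ` {v1,v2,v3}. {i,d} \<in> EK)"
    and sB: "simple_graph VB EB"
  shows "graph_iso VB EB V E"
proof -
  let ?T = "{v1,v2,v3}"
  define \<psi> where "\<psi> = \<phi>(v := c)"
  have inj: "inj_on \<phi> V'" using phi bij_betw_imp_inj_on by blast
  have img: "\<phi> ` V' = VK" using phi bij_betw_imp_surj_on by blast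
  have Vd: "V - {v} = V' - ?T" unfolding Vs using basic(14-16) by auto
  have im1: "\<phi> ` (V - {v}) = VK - \<phi> ` ?T"
  proof -
    have "?T \<subseteq> V'" unfolding Vs by auto
    then have "\<phi> ` (V' - ?T) = \<phi> ` V' - \<phi> ` ?T" using inj by (intro inj_on_image_set_diff) auto
    then show ?thesis using img Vd by simp
  qed
  have psi_o: "\<psi> u = \<phi> u" if "u \<noteq> v" for u using that by (simp add: \<psi>_def)
  have psi_v: "\<psi> v = c" by (simp add: \<psi>_def)
  have imV: "\<psi> ` V = VB"
  proof -
    have "V = insert v (V - {v})" using basic(1) by auto
    then have "\<psi> ` V = insert (\<psi> v) (\<psi> ` (V - {v}))" by (metis image_insert)
    also have "\<psi> ` (V - {v}) = \<phi> ` (V - {v})" using psi_o by auto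
    finally show ?thesis unfolding VB im1 psi_v by auto
  qed
  have injpsi: "inj_on \<psi> V"
  proof (rule inj_onI)
    fix a b assume a: "a \<in> V" and b: "b \<in> V" and e: "\<psi> a = \<psi> b"
    have sub: "V - {v} \<subseteq> V'" unfolding Vs by auto
    show "a = b"
    proof (cases "a = v"; cases "b = v")
      assume "a = v" "b \<noteq> v"
      then have "\<phi> b \<in> VK - \<phi> ` ?T" using im1 b by auto
      then show ?thesis using e cn psi_o psi_v \<open>a = v\<close> \<open>b \<noteq> v\<close> by auto
    next
      assume "a \<noteq> v" "b = v"
      then have "\<phi> a \<in> VK - \<phi> ` ?T" using im1 a by auto
      then show ?thesis using e cn psi_o psi_v \<open>b = v\<close> \<open>a \<noteq> v\<close> by auto
    next
      assume "a \<noteq> v" "b \<noteq> v"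
      then have "\<phi> a = \<phi> b" "a \<in> V'" "b \<in> V'" using e psi_o sub a b by auto
      then show ?thesis using inj_onD[OF inj] by blast
    qed simp
  qed
  have bij: "bij_betw \<psi> V VB" using injpsi imV by (simp add: bij_betw_def)
  have sub: "V - {v} \<subseteq> V'" unfolding Vs by auto
  have "\<forall>a\<in>V. \<forall>b\<in>V. {a, b} \<in> E \<longleftrightarrow> {\<psi> a, \<psi> b} \<in> EB"
  proof (intro ballI)
    fix a b assume a: "a \<in> V" and b: "b \<in> V"
    have nv: "{x} \<notin> E" for x using ein[of x x] by auto
    have nvB: "{x} \<notin> EB" for x using edge_in[OF sB, of x x] by auto
    have key: "{v, b} \<in> E \<longleftrightarrow> {c, \<phi> b} \<in> EB" if b: "b \<in> V - {v}" for b
    proof -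
      have pb: "\<phi> b \<in> VK - \<phi> ` ?T" using im1 b by auto
      have bV': "b \<in> V'" using b sub by auto
      have T': "v1 \<in> V'" "v2 \<in> V'" "v3 \<in> V'" unfolding Vs by auto
      have "{v, b} \<in> E \<longleftrightarrow> ({v1,b} \<in> E' \<or> {v2,b} \<in> E' \<or> {v3,b} \<in> E')" using J2[OF b] .
      also have "\<dots> \<longleftrightarrow> ({\<phi> v1,\<phi> b} \<in> EK \<or> {\<phi> v2,\<phi> b} \<in> EK \<or> {\<phi> v3,\<phi> b} \<in> EK)"
        using adj bV' T' by blast
      also have "\<dots> \<longleftrightarrow> {c, \<phi> b} \<in> EB" using K2 pb by auto
      finally show ?thesis .
    qed
    show "{a, b} \<in> E \<longleftrightarrow> {\<psi> a, \<psi> b} \<in> EB"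
    proof (cases "a = v"; cases "b = v")
      assume "a = v" "b = v" then show ?thesis using nv nvB psi_v by simp
    next
      assume "a = v" "b \<noteq> v" then show ?thesis using key[of b] b psi_v psi_o by simp
    next
      assume "a \<noteq> v" "b = v" then show ?thesis using key[of a] a psi_v psi_o by (simp add: insert_commute)
    next
      assume ab: "a \<noteq> v" "b \<noteq> v"
      then have "a \<in> V - {v}" "b \<in> V - {v}" using a b by auto
      moreover have "\<phi> a \<in> VK - \<phi> ` ?T" "\<phi> b \<in> VK - \<phi> ` ?T" using im1 calculation by auto
      ultimately have "{a,b} \<in> E \<longleftrightarrow> {a,b} \<in> E'" "a \<in> V'" "b \<in> V'"
        "{\<phi> a, \<phi> b} \<in> EB \<longleftrightarrow> {\<phi> a, \<phi> b} \<in> EK" using J1 sub K1 by auto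
      moreover have "{a, b} \<in> E' \<longleftrightarrow> {\<phi> a, \<phi> b} \<in> EK" using adj calculation(2,3) by blast
      ultimately show ?thesis using psi_o ab by simp
    qed
  qed
  then have "graph_iso V E VB EB" using bij unfolding graph_iso_def by blast
  then show ?thesis by (rule iso_sym)
qed

end

lemma card3_obtain: assumes "card S = 3" "a \<in> S" "b \<in> S" "a \<noteq> b"
  shows "\<exists>z. S = {a,b,z} \<and> z \<noteq> a \<and> z \<noteq> b"
proof -
  have fin: "finite S" using assms(1) by (metis card.infinite zero_neq_numeral)
  have "card (S - {a,b}) = 1" using assms fin by (simp add: card_Diff_subset)
  then obtain z where z: "S - {a,b} = {z}" by (rule card_1_singletonE)
  then have "S = {a,b,z}" using assms(2,3) by auto
  moreover have "z \<noteq> a" "z \<noteq> b" using z by auto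
  ultimately show ?thesis by blast
qed

lemma nodiaE: "nodia E \<Longrightarrow> {a,b} \<in> E \<Longrightarrow> {a,c} \<in> E \<Longrightarrow> {b,c} \<in> E \<Longrightarrow> {a,d} \<in> E \<Longrightarrow> {b,d} \<in> E \<Longrightarrow> c = d"
  unfolding nodia_def by blast

lemma dia2:
  assumes nd: "nodia E" and e: "{a1,a2} \<in> E" "{a1,a3} \<in> E" "{a2,a3} \<in> E"
    and pq: "p \<in> {a1,a2,a3}" "q \<in> {a1,a2,a3}" "p \<noteq> q" and w: "{p,w} \<in> E" "{q,w} \<in> E" "w \<notin> {a1,a2,a3}"
  shows False
proof -
  have s: "{x,y} \<in> E \<longleftrightarrow> {y,x} \<in> E" for x y by (simp add: insert_commute)
  have e': "{a2,a1} \<in> E" "{a3,a1} \<in> E" "{a3,a2} \<in> E" using e s by auto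
  have c1: "\<not> ({a1,w} \<in> E \<and> {a2,w} \<in> E)" using nodiaE[OF nd e(1) e(2) e(3), of w] w(3) by auto
  have c2: "\<not> ({a1,w} \<in> E \<and> {a3,w} \<in> E)" using nodiaE[OF nd e(2) e(1) e'(3), of w] w(3) by auto
  have c3: "\<not> ({a2,w} \<in> E \<and> {a3,w} \<in> E)" using nodiaE[OF nd e(3) e'(1) e'(2), of w] w(3) by auto
  show False using pq w(1,2) c1 c2 c3 by auto
qed

lemma step_case:
  fixes VH V :: "'a set"
  assumes kH: "klee VH EH" and tdH: "tri_data VH EH w t1 t2 t3 y1 y2 y3"
    and IH: "\<And>(V::'a set) E v v1 v2 v3 x1 x2 x3. simple_graph V E \<Longrightarrow> 4 \<le> card V \<Longrightarrow> tri_data V E v v1 v2 v3 x1 x2 x3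
       \<Longrightarrow> graph_iso (tri_vertices V v v1 v2 v3) (tri_edges E v v1 v2 v3 x1 x2 x3) VH EH \<Longrightarrow> klee V E"
    and sG: "simple_graph V E" and c4: "4 \<le> card V" and tdG: "tri_data V E v v1 v2 v3 x1 x2 x3"
    and iso: "graph_iso (tri_vertices V v v1 v2 v3) (tri_edges E v v1 v2 v3 x1 x2 x3)
                (tri_vertices VH w t1 t2 t3) (tri_edges EH w t1 t2 t3 y1 y2 y3)"
  shows "klee V E"
proof -
  have inv: "cubic VH EH" "card VH = 4 \<or> nodia EH" using klee_inv[OF kH] by auto
  have sH: "simple_graph VH EH" using inv(1) by (simp add: cubic_def)
  interpret G: tri V E v v1 v2 v3 x1 x2 x3 using sG tdG by unfold_locales
  interpret H: tri VH EH w t1 t2 t3 y1 y2 y3 using sH tdH by unfold_locales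
  let ?GV = "tri_vertices V v v1 v2 v3" and ?GE = "tri_edges E v v1 v2 v3 x1 x2 x3"
  let ?HV = "tri_vertices VH w t1 t2 t3" and ?HE = "tri_edges EH w t1 t2 t3 y1 y2 y3"
  obtain \<phi> where phi: "bij_betw \<phi> ?GV ?HV" and adj: "\<forall>a\<in>?GV. \<forall>b\<in>?GV. {a, b} \<in> ?GE \<longleftrightarrow> {\<phi> a, \<phi> b} \<in> ?HE"
    using iso unfolding graph_iso_def by blast
  define a1 where "a1 = \<phi> v1"
  define a2 where "a2 = \<phi> v2"
  define a3 where "a3 = \<phi> v3"
  have Tin: "v1 \<in> ?GV" "v2 \<in> ?GV" "v3 \<in> ?GV" unfolding G.Vs by auto
  have aV: "a1 \<in> ?HV" "a2 \<in> ?HV" "a3 \<in> ?HV" using Tin bij_betw_apply[OF phi] unfolding a1_def a2_def a3_def by auto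
  have inj: "inj_on \<phi> ?GV" using phi bij_betw_imp_inj_on by blast
  have adist: "a1 \<noteq> a2" "a1 \<noteq> a3" "a2 \<noteq> a3" using inj Tin G.basic(11-13) unfolding a1_def a2_def a3_def
    by (metis inj_on_eq_iff)+
  have ae: "{a1,a2} \<in> ?HE" "{a1,a3} \<in> ?HE" "{a2,a3} \<in> ?HE"
    using adj Tin G.N1 G.N2 unfolding a1_def a2_def a3_def by auto
  have imT: "\<phi> ` {v1,v2,v3} = {a1,a2,a3}" unfolding a1_def a2_def a3_def by simp
  note tri = H.triangle[OF ae]
  show ?thesis
  proof (cases "a1 \<in> {t1,t2,t3} \<or> a2 \<in> {t1,t2,t3} \<or> a3 \<in> {t1,t2,t3}")
    case True
    then have sub: "{a1,a2,a3} \<subseteq> {t1,t2,t3}" using tri by auto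
    have "card {a1,a2,a3} = card {t1,t2,t3}" using adist H.basic(11-13) by simp
    then have Teq: "{a1,a2,a3} = {t1,t2,t3}" using sub by (intro card_subset_eq) auto
    have tn: "t1 \<notin> VH - {w}" "t2 \<notin> VH - {w}" "t3 \<notin> VH - {w}" using H.basic(14-16) by auto
    have HVd: "?HV - {t1,t2,t3} = VH - {w}" unfolding H.Vs using tn by auto
    have "graph_iso VH EH V E"
    proof (rule G.transfer[OF phi adj])
      show "VH = (?HV - \<phi> ` {v1,v2,v3}) \<union> {w}" unfolding imT Teq HVd using H.basic(1) by auto
      show "w \<notin> ?HV - \<phi> ` {v1,v2,v3}" unfolding imT Teq HVd by auto
      show "\<forall>g\<in>?HV - \<phi> ` {v1,v2,v3}. \<forall>d\<in>?HV - \<phi> ` {v1,v2,v3}. {g,d} \<in> EH \<longleftrightarrow> {g,d} \<in> ?HE"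
        unfolding imT Teq HVd using H.J1 by auto
      show "\<forall>d\<in>?HV - \<phi> ` {v1,v2,v3}. {w,d} \<in> EH \<longleftrightarrow> (\<exists>i\<in>\<phi> ` {v1,v2,v3}. {i,d} \<in> ?HE)"
        unfolding imT Teq HVd using H.J2 by auto
      show "simple_graph VH EH" by (rule sH)
    qed
    then show ?thesis using klee.iso[OF kH sG] by blast
  next
    case False
    then have aH: "a1 \<in> VH - {w}" "a2 \<in> VH - {w}" "a3 \<in> VH - {w}" using aV unfolding H.Vs by auto
    have aeH: "{a1,a2} \<in> EH" "{a1,a3} \<in> EH" "{a2,a3} \<in> EH" using ae H.J1 aH by auto
    show ?thesis
    proof (cases "card VH = 4")
      case True
      then have cV: "card V = 4" using G.card' H.card' iso_card[OF iso] by simp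
      have "cubic ?HV ?HE" using H.cub_fwd[OF inv(1)] .
      then have "cubic ?GV ?GE" using iso_cubic[OF _ G.simple' iso_sym[OF iso]] by blast
      then have "cubic V E" using G.cub_bwd by blast
      then show ?thesis using cubic4_K4 cV klee.K4 by blast
    next
      case False
      then have nd: "nodia EH" using inv(2) by auto
      let ?T = "{a1,a2,a3}"
      have s: "\<And>x y. {x,y} \<in> EH \<longleftrightarrow> {y,x} \<in> EH" by (simp add: insert_commute)
      have nb: "\<And>u d. d \<in> nbrs EH u \<longleftrightarrow> {u,d} \<in> EH" using s by (simp add: nbrs_iff)
      have c3: "\<And>u. u \<in> VH \<Longrightarrow> card (nbrs EH u) = 3" using inv(1) by (simp add: cubic_def)
      have aV1: "a1 \<in> VH" "a2 \<in> VH" "a3 \<in> VH" using aH by auto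
      have inb: "a2 \<in> nbrs EH a1" "a3 \<in> nbrs EH a1" "a1 \<in> nbrs EH a2" "a3 \<in> nbrs EH a2"
        "a1 \<in> nbrs EH a3" "a2 \<in> nbrs EH a3"
        using nb[of a1 a2] nb[of a1 a3] nb[of a2 a1] nb[of a2 a3] nb[of a3 a1] nb[of a3 a2] aeH s by blast+
      obtain z1 where z1: "nbrs EH a1 = {a2,a3,z1}" "z1 \<noteq> a2" "z1 \<noteq> a3"
        using card3_obtain[OF c3[OF aV1(1)] inb(1) inb(2) adist(3)] by blast
      obtain z2 where z2: "nbrs EH a2 = {a1,a3,z2}" "z2 \<noteq> a1" "z2 \<noteq> a3"
        using card3_obtain[OF c3[OF aV1(2)] inb(3) inb(4) adist(2)] by blast
      obtain z3 where z3: "nbrs EH a3 = {a1,a2,z3}" "z3 \<noteq> a1" "z3 \<noteq> a2"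
        using card3_obtain[OF c3[OF aV1(3)] inb(5) inb(6) adist(1)] by blast
      have NA1: "\<And>d. {a1,d} \<in> EH \<longleftrightarrow> d = a2 \<or> d = a3 \<or> d = z1" using nb z1(1) by blast
      have NA2: "\<And>d. {a2,d} \<in> EH \<longleftrightarrow> d = a1 \<or> d = a3 \<or> d = z2" using nb z2(1) by blast
      have NA3: "\<And>d. {a3,d} \<in> EH \<longleftrightarrow> d = a1 \<or> d = a2 \<or> d = z3" using nb z3(1) by blast
      have zE: "{a1,z1} \<in> EH" "{a2,z2} \<in> EH" "{a3,z3} \<in> EH" using NA1 NA2 NA3 by auto
      have zV: "z1 \<in> VH" "z2 \<in> VH" "z3 \<in> VH" "z1 \<noteq> a1" "z2 \<noteq> a2" "z3 \<noteq> a3"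
        using edge_in[OF sH, OF zE(1)] edge_in[OF sH, OF zE(2)] edge_in[OF sH, OF zE(3)] by auto
      have zT: "z1 \<notin> ?T" "z2 \<notin> ?T" "z3 \<notin> ?T" using zV z1 z2 z3 by auto
      have zd: "z1 \<noteq> z2" "z1 \<noteq> z3" "z2 \<noteq> z3"
      proof -
        show "z1 \<noteq> z2"
        proof
          assume "z1 = z2" then have "{a2,z1} \<in> EH" using zE by simp
          note h = this
          show False by (rule dia2[OF nd aeH, of a1 a2 z1]) (use h zE zT(1) adist in auto)
        qed
        show "z1 \<noteq> z3"
        proof
          assume "z1 = z3" then have "{a3,z1} \<in> EH" using zE by simp
          note h = this
          show False by (rule dia2[OF nd aeH, of a1 a3 z1]) (use h zE zT(1) adist in auto)
        qed
        show "z2 \<noteq> z3"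
        proof
          assume "z2 = z3" then have "{a3,z2} \<in> EH" using zE by simp
          note h = this
          show False by (rule dia2[OF nd aeH, of a2 a3 z2]) (use h zE zT(2) adist in auto)
        qed
      qed
      have wT: "w \<notin> ?T" using aH by auto
      have NW: "\<And>d. {w,d} \<in> EH \<longleftrightarrow> d = y1 \<or> d = y2 \<or> d = y3" using H.nbv s by blast
      have yE: "{y1,w} \<in> EH" "{y2,w} \<in> EH" "{y3,w} \<in> EH" using H.basic(17-19) .
      have yT2: "\<not> (y1 \<in> ?T \<and> y2 \<in> ?T)" "\<not> (y1 \<in> ?T \<and> y3 \<in> ?T)" "\<not> (y2 \<in> ?T \<and> y3 \<in> ?T)"
      proof -
        show "\<not> (y1 \<in> ?T \<and> y2 \<in> ?T)"
        proof
          assume h: "y1 \<in> ?T \<and> y2 \<in> ?T"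
          show False by (rule dia2[OF nd aeH, of y1 y2 w]) (use h yE wT H.basic(8-10) in auto)
        qed
        show "\<not> (y1 \<in> ?T \<and> y3 \<in> ?T)"
        proof
          assume h: "y1 \<in> ?T \<and> y3 \<in> ?T"
          show False by (rule dia2[OF nd aeH, of y1 y3 w]) (use h yE wT H.basic(8-10) in auto)
        qed
        show "\<not> (y2 \<in> ?T \<and> y3 \<in> ?T)"
        proof
          assume h: "y2 \<in> ?T \<and> y3 \<in> ?T"
          show False by (rule dia2[OF nd aeH, of y2 y3 w]) (use h yE wT H.basic(8-10) in auto)
        qed
      qed
      have wz: "(w = z1 \<or> w = z2 \<or> w = z3) \<longleftrightarrow> (y1 \<in> ?T \<or> y2 \<in> ?T \<or> y3 \<in> ?T)"
      proof
        assume "w = z1 \<or> w = z2 \<or> w = z3"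
        then have "{a1,w} \<in> EH \<or> {a2,w} \<in> EH \<or> {a3,w} \<in> EH" using zE by auto
        then have "{w,a1} \<in> EH \<or> {w,a2} \<in> EH \<or> {w,a3} \<in> EH" by (simp add: insert_commute)
        then show "y1 \<in> ?T \<or> y2 \<in> ?T \<or> y3 \<in> ?T" using NW by auto
      next
        assume "y1 \<in> ?T \<or> y2 \<in> ?T \<or> y3 \<in> ?T"
        then have "{a1,w} \<in> EH \<or> {a2,w} \<in> EH \<or> {a3,w} \<in> EH" using yE by auto
        then show "w = z1 \<or> w = z2 \<or> w = z3" using NA1 NA2 NA3 wT by auto
      qed
      define VG where "VG = VH - {a2,a3}"
      define EG where "EG = {e\<in>EH. a1 \<notin> e \<and> a2 \<notin> e \<and> a3 \<notin> e} \<union> {{a1,z1},{a1,z2},{a1,z3}}"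
      have EGm: "\<And>p q. {p,q} \<in> EG \<longleftrightarrow> ({p,q} \<in> EH \<and> p \<notin> ?T \<and> q \<notin> ?T) \<or> (p = a1 \<and> q \<in> {z1,z2,z3}) \<or> (q = a1 \<and> p \<in> {z1,z2,z3})"
        unfolding EG_def using zT by (auto simp: doubleton_eq_iff)
      have Hv: "tri_vertices VG a1 a1 a2 a3 = VH" unfolding tri_vertices_def VG_def using aH by auto
      let ?S = "{{a1, a2}, {a2, a3}, {a3, a1}, {a1, z1}, {a2, z2}, {a3, z3}}"
      have Sm: "{a1,a2} \<in> ?S" "{a2,a3} \<in> ?S" "{a3,a1} \<in> ?S" "{a1,z1} \<in> ?S" "{a2,z2} \<in> ?S" "{a3,z3} \<in> ?S"
        by simp_all
      have Sm2: "{a2,a1} \<in> ?S" "{a3,a2} \<in> ?S" "{a1,a3} \<in> ?S"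
        using Sm(1-3) by (metis insert_commute)+
      have six: "{p,q} \<in> ?S" if "{p,q} \<in> EH" "p \<in> ?T" for p q
        using that(2)
      proof (elim insertE emptyE)
        assume pa: "p = a1"
        then have "q = a2 \<or> q = a3 \<or> q = z1" using that(1) NA1[of q] by simp
        then show ?thesis using pa Sm Sm2 by (elim disjE) simp_all
      next
        assume pa: "p = a2"
        then have "q = a1 \<or> q = a3 \<or> q = z2" using that(1) NA2[of q] by simp
        then show ?thesis using pa Sm Sm2 by (elim disjE) simp_all
      next
        assume pa: "p = a3"
        then have "q = a1 \<or> q = a2 \<or> q = z3" using that(1) NA3[of q] by simp
        then show ?thesis using pa Sm Sm2 by (elim disjE) simp_all
      qed
      have He: "tri_edges EG a1 a1 a2 a3 z1 z2 z3 = EH"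
      proof (rule set_eqI)
        fix e
        have "e \<in> tri_edges EG a1 a1 a2 a3 z1 z2 z3 \<longleftrightarrow> (e \<in> EG \<and> a1 \<notin> e) \<or> e \<in> {{a1, a2}, {a2, a3}, {a3, a1}, {a1, z1}, {a2, z2}, {a3, z3}}"
          by (simp only: tri_edges_def Un_iff mem_Collect_eq)
        also have "\<dots> \<longleftrightarrow> e \<in> EH"
        proof
          assume "(e \<in> EG \<and> a1 \<notin> e) \<or> e \<in> {{a1, a2}, {a2, a3}, {a3, a1}, {a1, z1}, {a2, z2}, {a3, z3}}"
          then show "e \<in> EH"
          proof
            assume h: "e \<in> EG \<and> a1 \<notin> e"
            then have "e \<noteq> {a1,z1}" "e \<noteq> {a1,z2}" "e \<noteq> {a1,z3}" by auto
            then show "e \<in> EH" using h unfolding EG_def by simp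
          next
            have a31: "{a3,a1} \<in> EH" using aeH(2) by (simp add: insert_commute)
            assume "e \<in> {{a1, a2}, {a2, a3}, {a3, a1}, {a1, z1}, {a2, z2}, {a3, z3}}"
            then show "e \<in> EH" by (elim insertE emptyE) (simp_all add: aeH zE a31)
          qed
        next
          assume e: "e \<in> EH"
          obtain p q where pq: "e = {p,q}" using sH e unfolding simple_graph_def by meson
          show "(e \<in> EG \<and> a1 \<notin> e) \<or> e \<in> {{a1, a2}, {a2, a3}, {a3, a1}, {a1, z1}, {a2, z2}, {a3, z3}}"
          proof (cases "p \<in> ?T \<or> q \<in> ?T")
            case True
            then show ?thesis
            proof
              assume pT: "p \<in> ?T"
              have "{p,q} \<in> EH" using e unfolding pq .
              then have "{p,q} \<in> ?S" using pT by (rule six)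
              then have "e \<in> ?S" unfolding pq .
              then show ?thesis by (rule disjI2)
            next
              assume qT: "q \<in> ?T"
              have eqp: "e = {q,p}" unfolding pq by (rule insert_commute)
              have "{q,p} \<in> EH" using e unfolding eqp .
              then have "{q,p} \<in> ?S" using qT by (rule six)
              then have "e \<in> ?S" unfolding eqp .
              then show ?thesis by (rule disjI2)
            qed
          next
            case False
            then have "a1 \<notin> e" "a2 \<notin> e" "a3 \<notin> e" using pq by auto
            then have "e \<in> EG" using e unfolding EG_def by simp
            then show ?thesis using \<open>a1 \<notin> e\<close> by blast
          qed
        qed
        finally show "e \<in> tri_edges EG a1 a1 a2 a3 z1 z2 z3 \<longleftrightarrow> e \<in> EH" .
      qed
      have sGp: "simple_graph VG EG"
      proof -
        have "finite VG" unfolding VG_def using H.finV by simp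
        moreover have "\<forall>e\<in>EG. \<exists>a b. a \<in> VG \<and> b \<in> VG \<and> a \<noteq> b \<and> e = {a, b}"
        proof
          fix e assume "e \<in> EG"
          then consider "e \<in> EH" "a1 \<notin> e" "a2 \<notin> e" "a3 \<notin> e" | "e = {a1,z1}" | "e = {a1,z2}" | "e = {a1,z3}"
            unfolding EG_def by blast
          then show "\<exists>a b. a \<in> VG \<and> b \<in> VG \<and> a \<noteq> b \<and> e = {a, b}"
          proof cases
            case 1
            then obtain p q where "p \<in> VH" "q \<in> VH" "p \<noteq> q" "e = {p,q}" using sH unfolding simple_graph_def by blast
            then show ?thesis using 1 unfolding VG_def by blast
          qed (use aH zV zT adist in \<open>auto simp: VG_def\<close>)
        qed
        ultimately show ?thesis unfolding simple_graph_def by blast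
      qed
      have tdGp: "tri_data VG EG a1 a1 a2 a3 z1 z2 z3"
      proof -
        have "nbrs EG a1 = {z1,z2,z3}"
        proof (rule set_eqI)
          fix x show "x \<in> nbrs EG a1 \<longleftrightarrow> x \<in> {z1,z2,z3}" unfolding nbrs_iff EGm by auto
        qed
        then show ?thesis unfolding tri_data_def VG_def using aH zd adist by auto
      qed
      interpret Gp: tri VG EG a1 a1 a2 a3 z1 z2 z3 using sGp tdGp by unfold_locales
      have c6: "6 \<le> card VH"
      proof -
        have "card {a1,a2,a3,z1,z2,z3} = 6" using adist zd zT by auto
        moreover have "{a1,a2,a3,z1,z2,z3} \<subseteq> VH" using aH zV by auto
        ultimately show ?thesis using H.finV by (metis card_mono)
      qed
      have "card VH = card VG + 2" using Gp.card' Hv by simp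
      then have cG: "4 \<le> card VG" using c6 by simp
      have kGp: "klee VG EG"
        by (rule IH[OF sGp cG tdGp]) (unfold Hv He, rule iso_refl)
      define y1' where "y1' = (if y1 \<in> ?T then a1 else y1)"
      define y2' where "y2' = (if y2 \<in> ?T then a1 else y2)"
      define y3' where "y3' = (if y3 \<in> ?T then a1 else y3)"
      have yq: "\<And>d. d \<notin> ?T \<Longrightarrow> (d = y1') \<longleftrightarrow> (d = y1)" "\<And>d. d \<notin> ?T \<Longrightarrow> (d = y2') \<longleftrightarrow> (d = y2)"
        "\<And>d. d \<notin> ?T \<Longrightarrow> (d = y3') \<longleftrightarrow> (d = y3)"
        unfolding y1'_def y2'_def y3'_def by auto
      have ya: "(a1 = y1') \<longleftrightarrow> y1 \<in> ?T" "(a1 = y2') \<longleftrightarrow> y2 \<in> ?T" "(a1 = y3') \<longleftrightarrow> y3 \<in> ?T"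
        unfolding y1'_def y2'_def y3'_def by auto
      have nbW: "nbrs EG w = {y1',y2',y3'}"
      proof (rule set_eqI)
        fix x
        show "x \<in> nbrs EG w \<longleftrightarrow> x \<in> {y1',y2',y3'}"
          unfolding nbrs_iff EGm using NW[of x] s[of x w] wz wT yT2 adist
          unfolding y1'_def y2'_def y3'_def by auto
      qed
      have tdW: "tri_data VG EG w t1 t2 t3 y1' y2' y3'"
      proof -
        have "y1' \<noteq> y2'" "y2' \<noteq> y3'" "y1' \<noteq> y3'" using yT2 H.basic(8-10)
          unfolding y1'_def y2'_def y3'_def by auto
        moreover have "w \<in> VG" using H.basic(1) wT unfolding VG_def by auto
        moreover have "t1 \<notin> VG - {w}" "t2 \<notin> VG - {w}" "t3 \<notin> VG - {w}" using H.basic(14-16) unfolding VG_def by auto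
        ultimately show ?thesis unfolding tri_data_def using nbW H.basic(11-13) by auto
      qed
      interpret W: tri VG EG w t1 t2 t3 y1' y2' y3' using sGp tdW by unfold_locales
      let ?WV = "tri_vertices VG w t1 t2 t3" and ?WE = "tri_edges EG w t1 t2 t3 y1' y2' y3'"
      have kW: "klee ?WV ?WE" by (rule klee.step[OF kGp tdW])
      have ta: "t1 \<notin> VH - {w}" "t2 \<notin> VH - {w}" "t3 \<notin> VH - {w}" using H.basic(14-16) by auto
      have "graph_iso ?WV ?WE V E"
      proof (rule G.transfer[OF phi adj])
        show "?WV = (?HV - \<phi> ` {v1,v2,v3}) \<union> {a1}" unfolding imT tri_vertices_def VG_def
          using ta aH adist by auto
        show "a1 \<notin> ?HV - \<phi> ` {v1,v2,v3}" unfolding imT by simp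
        show "\<forall>g\<in>?HV - \<phi> ` {v1,v2,v3}. \<forall>d\<in>?HV - \<phi> ` {v1,v2,v3}. {g,d} \<in> ?WE \<longleftrightarrow> {g,d} \<in> ?HE"
        proof (intro ballI)
          fix g d assume g: "g \<in> ?HV - \<phi> ` {v1,v2,v3}" and d: "d \<in> ?HV - \<phi> ` {v1,v2,v3}"
          then have gT: "g \<notin> ?T" and dT: "d \<notin> ?T" unfolding imT by auto
          have eg: "({g,d} \<in> EG) = ({g,d} \<in> EH)" using EGm[of g d] gT dT by auto
          show "{g,d} \<in> ?WE \<longleftrightarrow> {g,d} \<in> ?HE" unfolding W.TE H.TE eg
            yq(1)[OF gT] yq(2)[OF gT] yq(3)[OF gT] yq(1)[OF dT] yq(2)[OF dT] yq(3)[OF dT]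
            by (rule refl)
        qed
        show "\<forall>d\<in>?HV - \<phi> ` {v1,v2,v3}. {a1,d} \<in> ?WE \<longleftrightarrow> (\<exists>i\<in>\<phi> ` {v1,v2,v3}. {i,d} \<in> ?HE)"
        proof (intro ballI)
          fix d assume d: "d \<in> ?HV - \<phi> ` {v1,v2,v3}"
          then have dT: "d \<notin> ?T" unfolding imT by auto
          have at: "a1 \<noteq> t1" "a1 \<noteq> t2" "a1 \<noteq> t3" "a2 \<noteq> t1" "a2 \<noteq> t2" "a2 \<noteq> t3"
            "a3 \<noteq> t1" "a3 \<noteq> t2" "a3 \<noteq> t3" "a1 \<noteq> w" "a2 \<noteq> w" "a3 \<noteq> w" using ta aH by auto
          have e1: "{a1,d} \<in> EG \<longleftrightarrow> d \<in> {z1,z2,z3}" using EGm[of a1 d] dT by auto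
          have h1: "{a1,d} \<in> EH \<longleftrightarrow> d = z1" "{a2,d} \<in> EH \<longleftrightarrow> d = z2" "{a3,d} \<in> EH \<longleftrightarrow> d = z3"
            using NA1[of d] NA2[of d] NA3[of d] dT by auto
          have L: "{a1,d} \<in> ?WE \<longleftrightarrow> (d \<in> {z1,z2,z3} \<and> d \<noteq> w) \<or> (y1 \<in> ?T \<and> d = t1)
              \<or> (y2 \<in> ?T \<and> d = t2) \<or> (y3 \<in> ?T \<and> d = t3)"
            unfolding W.TE e1 ya using at by simp
          have R: "(\<exists>i\<in>\<phi> ` {v1,v2,v3}. {i,d} \<in> ?HE) \<longleftrightarrow>
             ({a1,d} \<in> ?HE \<or> {a2,d} \<in> ?HE \<or> {a3,d} \<in> ?HE)" unfolding imT by simp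
          have R1: "{a1,d} \<in> ?HE \<longleftrightarrow> (d = z1 \<and> d \<noteq> w) \<or> (a1 = y1 \<and> d = t1) \<or> (a1 = y2 \<and> d = t2) \<or> (a1 = y3 \<and> d = t3)"
            unfolding H.TE h1 using at by simp
          have R2: "{a2,d} \<in> ?HE \<longleftrightarrow> (d = z2 \<and> d \<noteq> w) \<or> (a2 = y1 \<and> d = t1) \<or> (a2 = y2 \<and> d = t2) \<or> (a2 = y3 \<and> d = t3)"
            unfolding H.TE h1 using at by simp
          have R3: "{a3,d} \<in> ?HE \<longleftrightarrow> (d = z3 \<and> d \<noteq> w) \<or> (a3 = y1 \<and> d = t1) \<or> (a3 = y2 \<and> d = t2) \<or> (a3 = y3 \<and> d = t3)"
            unfolding H.TE h1 using at by simp
          show "{a1,d} \<in> ?WE \<longleftrightarrow> (\<exists>i\<in>\<phi> ` {v1,v2,v3}. {i,d} \<in> ?HE)"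
            unfolding L R R1 R2 R3 by blast
        qed
        show "simple_graph ?WV ?WE" by (rule W.simple')
      qed
      then show ?thesis using klee.iso[OF kW sG] by blast
    qed
  qed
qed

lemma main_ind:
  fixes VK :: "'a set"
  assumes "klee VK EK"
  shows "\<forall>(V::'a set) E v v1 v2 v3 x1 x2 x3. simple_graph V E \<longrightarrow> 4 \<le> card V \<longrightarrow> tri_data V E v v1 v2 v3 x1 x2 x3
     \<longrightarrow> graph_iso (tri_vertices V v v1 v2 v3) (tri_edges E v v1 v2 v3 x1 x2 x3) VK EK \<longrightarrow> klee V E"
  using assms
proof (induction rule: klee.induct)
  case (K4 V0 E0)
  show ?case
  proof (intro allI impI)
    fix V :: "'a set" and E v v1 v2 v3 x1 x2 x3
    assume sg: "simple_graph V E" and c: "4 \<le> card V" and td: "tri_data V E v v1 v2 v3 x1 x2 x3"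
      and iso: "graph_iso (tri_vertices V v v1 v2 v3) (tri_edges E v v1 v2 v3 x1 x2 x3) V0 E0"
    interpret G: tri V E v v1 v2 v3 x1 x2 x3 using sg td by unfold_locales
    have "card (tri_vertices V v v1 v2 v3) = 4" using iso_card[OF iso] K4.hyps by (simp add: is_K4_def)
    then show "klee V E" using G.card' c by simp
  qed
next
  case (step VH EH w t1 t2 t3 y1 y2 y3)
  show ?case
  proof (intro allI impI)
    fix V :: "'a set" and E v v1 v2 v3 x1 x2 x3
    assume sg: "simple_graph V E" and c: "4 \<le> card V" and td: "tri_data V E v v1 v2 v3 x1 x2 x3"
      and iso: "graph_iso (tri_vertices V v v1 v2 v3) (tri_edges E v v1 v2 v3 x1 x2 x3)
                  (tri_vertices VH w t1 t2 t3) (tri_edges EH w t1 t2 t3 y1 y2 y3)"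
    show "klee V E"
      by (rule step_case[OF step.hyps(1) step.hyps(2) step.IH[rule_format] sg c td iso])
  qed
next
  case (iso V0 E0 V1 E1)
  show ?case
  proof (intro allI impI)
    fix V :: "'a set" and E v v1 v2 v3 x1 x2 x3
    assume sg: "simple_graph V E" and c: "4 \<le> card V" and td: "tri_data V E v v1 v2 v3 x1 x2 x3"
      and i: "graph_iso (tri_vertices V v v1 v2 v3) (tri_edges E v v1 v2 v3 x1 x2 x3) V1 E1"
    have "graph_iso (tri_vertices V v v1 v2 v3) (tri_edges E v v1 v2 v3 x1 x2 x3) V0 E0"
      using iso_trans[OF i iso_sym[OF iso.hyps(3)]] .
    then show "klee V E" using iso.IH sg c td by blast
  qed
qed

theorem mainTheorem4:
  fixes V :: "'a set" and E :: "'a set set" and v v1 v2 v3 x1 x2 x3 :: 'a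
  assumes "cubic V E"
    and "card V \<ge> 4"
    and "tri_data V E v v1 v2 v3 x1 x2 x3"
    and "klee (tri_vertices V v v1 v2 v3) (tri_edges E v v1 v2 v3 x1 x2 x3)"
  shows "klee V E"
proof -
  have sg: "simple_graph V E" using assms(1) by (simp add: cubic_def)
  show ?thesis using main_ind[OF assms(4)] sg assms(2,3) iso_refl by blast
qed

end
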